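(* Assume $\mu_n\to0$, $n^{1/2}\mu_n\to\infty$, and $\theta_n/\mu_n\to\zeta\in\mathbb R\cup\{-\infty,\infty\}$. 1. If $|\zeta|<1$, then $G_{A,n,\theta_n}$ converges weakly to the cdf $\mathbf 1(\cdot\ge-\zeta)$. 2. If $1\le|\zeta|<\infty$, then $G_{A,n,\theta_n}$ converges weakly to the cdf $\mathbf 1(\cdot\ge-1/\zeta)$. 3. If $|\zeta|=\infty$, then $G_{A,n,\theta_n}$ converges weakly to the cdf $\mathbf 1(\cdot\ge0)$.
   Context: Gaussian location model: for each sample size $n$, $y_1,\dots,y_n$ are i.i.d. $N(\theta,1)$ with $\theta\in\mathbb R$ unknown; $\bar y$ is their mean. $P_{n,\theta}$ denotes the probability governing a sample of size $n$ when $\theta$ is the true parameter. Given a nonrandom tuning parameter $\mu_n>0$, the adaptive LASSO estimator is $\hat\theta_A=0$ if $|\bar y|\le\mu_n$ and $\hat\theta_A=\bar y-\mu_n^2/\bar y$ if $|\bar y|>\mu_n$. $G_{A,n,\theta}$ denotes the cdf of $\mu_n^{-1}(\hat\theta_A-\theta)$ under $P_{n,\theta}$. *)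

theory Defs
  imports "HOL-Probability.Probability"
begin

definition sample_law :: "nat \<Rightarrow> real \<Rightarrow> (nat \<Rightarrow> real) measure" where
  "sample_law n \<theta> = PiM {..<n} (\<lambda>_. density lborel (normal_density \<theta> 1))"

definition sample_mean :: "nat \<Rightarrow> (nat \<Rightarrow> real) \<Rightarrow> real" where
  "sample_mean n y = (\<Sum>i<n. y i) / real n"

definition alasso :: "real \<Rightarrow> real \<Rightarrow> real" where
  "alasso m yb = (if \<bar>yb\<bar> \<le> m then 0 else yb - m\<^sup>2 / yb)"

definition G_A :: "(nat \<Rightarrow> real) \<Rightarrow> nat \<Rightarrow> real \<Rightarrow> real \<Rightarrow> real" where
  "G_A \<mu> n \<theta> x = measure (sample_law n \<theta>)
     {y \<in> space (sample_law n \<theta>). (alasso (\<mu> n) (sample_mean n y) - \<theta>) / \<mu> n \<le> x}"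

definition cdf_weak_conv :: "(nat \<Rightarrow> real \<Rightarrow> real) \<Rightarrow> (real \<Rightarrow> real) \<Rightarrow> bool" where
  "cdf_weak_conv Fs F \<longleftrightarrow> (\<forall>x. isCont F x \<longrightarrow> (\<lambda>n. Fs n x) \<longlonglongrightarrow> F x)"

definition step_cdf :: "real \<Rightarrow> real \<Rightarrow> real" where
  "step_cdf c x = (if x \<ge> c then 1 else 0)"

end

theory Submission
  imports Defs
begin

lemma sample_mean_tail:
  assumes n: "n \<ge> 1" and d: "d > 0"
  shows "measure (sample_law n \<theta>) {y \<in> space (sample_law n \<theta>). \<bar>sample_mean n y - \<theta>\<bar> \<ge> d}
          \<le> 1 / (real n * d\<^sup>2)"
proof -
  define N where "N = density lborel (normal_density \<theta> 1)"
  define M where "M = sample_law n \<theta>"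
  have MN: "M = PiM {..<n} (\<lambda>_. N)" unfolding M_def N_def sample_law_def ..
  have pN: "prob_space N" unfolding N_def by (rule prob_space_normal_density) simp
  interpret prob_space M unfolding MN using pN by (auto intro: prob_space_PiM)
  have sN: "sets N = sets borel" unfolding N_def by simp
  have In: "{..<n} \<noteq> {}" using n by (auto simp: lessThan_empty_iff)
  have rv: "random_variable N (\<lambda>\<omega>. \<omega> i)" if "i \<in> {..<n}" for i
    unfolding MN using that by (rule measurable_component_singleton)
  have comp: "distr M N (\<lambda>\<omega>. \<omega> i) = N" if "i \<in> {..<n}" for i
    unfolding MN using pN that by (intro distr_PiM_component) auto
  have ind0: "indep_vars (\<lambda>_. N) (\<lambda>i \<omega>. \<omega> i) {..<n}"
  proof (subst indep_vars_iff_distr_eq_PiM'[OF In rv])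
    have "distr M (PiM {..<n} (\<lambda>_. N)) (\<lambda>x. \<lambda>i\<in>{..<n}. x i) = distr M M (\<lambda>x. x)"
      by (rule distr_cong) (auto simp: MN space_PiM)
    also have "\<dots> = PiM {..<n} (\<lambda>i. distr M N (\<lambda>\<omega>. \<omega> i))"
      using comp by (auto simp: MN intro!: PiM_cong)
    finally show "distr M (PiM {..<n} (\<lambda>_. N)) (\<lambda>x. \<lambda>i\<in>{..<n}. x i) = PiM {..<n} (\<lambda>i. distr M N (\<lambda>\<omega>. \<omega> i))" .
  qed auto
  have ind: "indep_vars (\<lambda>_. borel) (\<lambda>i \<omega>. \<omega> i - \<theta>) {..<n}"
    using indep_vars_compose2[OF ind0, of "\<lambda>i x. x - \<theta>" "\<lambda>_. borel"]
    by (simp add: measurable_cong_sets[OF sN refl])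
  have dist: "distributed M lborel (\<lambda>\<omega>. \<omega> i - \<theta>) (normal_density 0 1)" if "i \<in> {..<n}" for i
  proof -
    have "distributed M lborel (\<lambda>\<omega>. \<omega> i) (normal_density \<theta> 1)"
      unfolding distributed_def
    proof (intro conjI)
      have "distr M lborel (\<lambda>\<omega>. \<omega> i) = distr M N (\<lambda>\<omega>. \<omega> i)"
        by (rule distr_cong) (auto simp: sN)
      then show "distr M lborel (\<lambda>\<omega>. \<omega> i) = density lborel (normal_density \<theta> 1)"
        using comp[OF that] by (simp add: N_def)
      show "random_variable lborel (\<lambda>\<omega>. \<omega> i)"
        using rv[OF that] by (simp add: measurable_cong_sets[OF refl sN])
    qed simp
    from normal_density_affine[OF this, of 1 "-\<theta>"] show ?thesis by simp
  qed
  have S: "distributed M lborel (\<lambda>x. \<Sum>i<n. x i - \<theta>) (normal_density 0 (sqrt (real n)))"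
    using sum_indep_normal[OF _ In ind, of "\<lambda>_. 1" "\<lambda>_. 0"] dist by simp
  define W where "W = (\<lambda>x. 0 + (1 / real n) * (\<Sum>i<n. x i - \<theta>))"
  have Wd: "distributed M lborel W (normal_density (0 + (1/real n) * 0) (\<bar>1/real n\<bar> * sqrt (real n)))"
    unfolding W_def using n by (intro normal_density_affine[OF S]) auto
  define s where "s = \<bar>1/real n\<bar> * sqrt (real n)"
  have s: "s > 0" using n by (simp add: s_def)
  have s2: "s\<^sup>2 = 1 / real n" using n by (simp add: s_def power2_eq_square)
  have Wd': "distributed M lborel W (normal_density 0 s)" using Wd by (simp add: s_def)
  have EW: "expectation W = 0" using normal_distributed_expectation[OF s Wd'] .
  have VW: "variance W = s\<^sup>2" using normal_distributed_variance[OF s Wd'] .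
  have intW: "integrable M (\<lambda>x. W x ^ 2)"
  proof -
    have "integrable lborel (\<lambda>x. normal_density 0 s x * x^2)"
      using integrable_normal_moment[where \<mu>=0 and \<sigma>=s and k=2] s by simp
    then show ?thesis using distributed_integrable[OF Wd', of "\<lambda>x. x^2"] by simp
  qed
  have rvW: "random_variable borel W" using distributed_measurable[OF Wd'] by simp
  have ch: "prob {x\<in>space M. \<bar>W x - expectation W\<bar> \<ge> d} \<le> variance W / d\<^sup>2"
    by (rule Chebyshev_inequality[OF rvW intW d])
  have eq: "sample_mean n y - \<theta> = W y" for y
    using n by (simp add: sample_mean_def W_def sum_subtractf field_simps)
  have ch2: "prob {x\<in>space M. \<bar>W x\<bar> \<ge> d} \<le> 1 / (real n * d\<^sup>2)"
    using ch unfolding VW s2 by (simp add: EW)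
  show ?thesis using ch2 unfolding M_def[symmetric] eq by simp
qed


definition TT :: "real \<Rightarrow> real \<Rightarrow> real" where
  "TT u \<tau> = (if \<bar>u\<bar> \<le> 1 then - \<tau> else u - 1/u - \<tau>)"

lemma alasso_scaled:
  assumes m: "m > 0"
  shows "(alasso m v - t) / m = TT (v/m) (t/m)"
proof -
  have a: "\<bar>v/m\<bar> = \<bar>v\<bar>/m" using m by (simp add: abs_divide)
  have b: "(\<bar>v\<bar>/m \<le> 1) = (\<bar>v\<bar> \<le> m)" using m by (rule divide_le_eq_1_pos)
  show ?thesis
  proof (cases "\<bar>v\<bar> \<le> m")
    case True
    then show ?thesis using a b by (simp add: alasso_def TT_def)
  next
    case False
    have e1: "(v - m^2/v - t)/m = v/m - (m^2/v)/m - t/m" by (simp add: diff_divide_distrib)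
    have e2: "(m^2/v)/m = 1/(v/m)" using m by (simp add: power2_eq_square)
    have m2: "\<bar>m\<bar> = m" using m by simp
    show ?thesis using False a b e1 e2 m2 by (simp add: alasso_def TT_def)
  qed
qed

lemma scaled_close:
  fixes m v t \<delta> :: real
  assumes m: "m > 0" and "\<bar>v - t\<bar> < \<delta> * m"
  shows "\<bar>v/m - t/m\<bar> < \<delta>"
proof -
  have "\<bar>v/m - t/m\<bar> = \<bar>(v - t)/m\<bar>" by (simp only: diff_divide_distrib)
  also have "\<dots> = \<bar>v - t\<bar> / m" using m by (rule abs_div_pos[symmetric])
  also have "\<dots> < \<delta>" using assms(2) m by (subst pos_divide_less_eq) auto
  finally show ?thesis .
qed

lemma divle: "0 \<le> a \<Longrightarrow> 1 \<le> b \<Longrightarrow> a / b \<le> (a::real)"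
proof -
  assume a: "0 \<le> a" and b: "1 \<le> b"
  have "a * 1 \<le> a * b" using b a by (rule mult_left_mono)
  then show "a / b \<le> a" using b by (subst pos_divide_le_eq) auto
qed

lemma P1:
  fixes z \<tau> u \<eta> \<epsilon> :: real
  assumes "\<bar>z\<bar> < 1" "\<bar>\<tau> - z\<bar> < \<eta>" "\<bar>u - \<tau>\<bar> < \<eta>" "3 * \<eta> \<le> 1 - \<bar>z\<bar>" "\<eta> \<le> \<epsilon>"
  shows "\<bar>TT u \<tau> - (- z)\<bar> < \<epsilon>"
proof -
  have tri: "\<bar>u\<bar> \<le> \<bar>u - \<tau>\<bar> + \<bar>\<tau> - z\<bar> + \<bar>z\<bar>" by linarith
  have "\<bar>u\<bar> \<le> 1" using assms tri by linarith
  then have TTe: "TT u \<tau> = - \<tau>" by (simp add: TT_def)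
  show ?thesis unfolding TTe using assms by linarith
qed

lemma P2:
  fixes z \<tau> u \<eta> \<epsilon> :: real
  assumes z: "1 \<le> \<bar>z\<bar>" and tz: "\<bar>\<tau> - z\<bar> < \<eta>" and ut: "\<bar>u - \<tau>\<bar> < \<eta>"
    and eta: "0 < \<eta>" "\<eta> \<le> 1" "9 * \<eta> \<le> \<epsilon>"
  shows "\<bar>TT u \<tau> - (- 1 / z)\<bar> < \<epsilon>"
proof (cases "\<bar>u\<bar> \<le> 1")
  case True
  have tri: "\<bar>z\<bar> \<le> \<bar>z - \<tau>\<bar> + \<bar>\<tau> - u\<bar> + \<bar>u\<bar>" by linarith
  have zz: "\<bar>z\<bar> < 1 + 2*\<eta>" using True tz ut tri by (simp add: abs_minus_commute)
  have z0: "z \<noteq> 0" using z by auto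
  have z2: "z^2 \<ge> 1"
  proof -
    have "1^2 \<le> \<bar>z\<bar>^2" using z by (intro power_mono) auto
    then show ?thesis by simp
  qed
  have "z - 1/z = (z^2 - 1) / z" using z0 by (simp add: field_simps power2_eq_square)
  then have "\<bar>z - 1/z\<bar> = \<bar>z^2 - 1\<bar> / \<bar>z\<bar>" by (simp add: abs_divide)
  also have "\<bar>z^2 - 1\<bar> = z^2 - 1" using z2 by simp
  also have "(z^2 - 1) / \<bar>z\<bar> \<le> z^2 - 1" using z2 z by (intro divle) auto
  also have "z^2 - 1 < 8 * \<eta>"
  proof -
    have "z^2 = \<bar>z\<bar>^2" by simp
    also have "\<dots> < (1 + 2*\<eta>)^2" using zz z by (intro power_strict_mono) auto
    also have "\<dots> = 1 + 4*\<eta> + 4*(\<eta>*\<eta>)" by (simp add: power2_eq_square algebra_simps)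
    also have "\<eta>*\<eta> \<le> \<eta>" using eta by (simp add: mult_le_cancel_left1)
    then have "1 + 4*\<eta> + 4*(\<eta>*\<eta>) \<le> 1 + 8*\<eta>" by linarith
    finally show ?thesis by linarith
  qed
  finally have zs: "\<bar>z - 1/z\<bar> < 8 * \<eta>" .
  have tri2: "\<bar>\<tau> - 1/z\<bar> \<le> \<bar>\<tau> - z\<bar> + \<bar>z - 1/z\<bar>" by linarith
  have "\<bar>\<tau> - 1/z\<bar> < 9 * \<eta>" using tz zs tri2 by linarith
  moreover have TTe: "TT u \<tau> = - \<tau>" using True by (simp add: TT_def)
  moreover have "- 1 / z = - (1/z)" by simp
  ultimately show ?thesis using eta by (simp add: abs_minus_commute) 
next
  case False
  have u0: "u \<noteq> 0" and z0: "z \<noteq> 0" using False z by auto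
  have "1/u - 1/z = (z - u) / (u * z)" using u0 z0 by (simp add: field_simps)
  then have "\<bar>1/u - 1/z\<bar> = \<bar>z - u\<bar> / (\<bar>u\<bar> * \<bar>z\<bar>)" by (simp add: abs_divide abs_mult)
  also have "\<dots> \<le> \<bar>z - u\<bar>"
  proof -
    have "1 * 1 \<le> \<bar>u\<bar> * \<bar>z\<bar>" using False z by (intro mult_mono) auto
    then show ?thesis by (intro divle) auto
  qed
  finally have a: "\<bar>1/u - 1/z\<bar> \<le> \<bar>z - u\<bar>" .
  have tri: "\<bar>z - u\<bar> \<le> \<bar>\<tau> - z\<bar> + \<bar>u - \<tau>\<bar>" by linarith
  have TTe: "TT u \<tau> = u - 1/u - \<tau>" using False by (simp add: TT_def)
  have e: "TT u \<tau> - (- 1 / z) = (u - \<tau>) - (1/u - 1/z)" unfolding TTe by simp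
  have tri3: "\<bar>(u - \<tau>) - (1/u - 1/z)\<bar> \<le> \<bar>u - \<tau>\<bar> + \<bar>1/u - 1/z\<bar>" by linarith
  show ?thesis unfolding e using tri3 a tri tz ut eta by linarith
qed

lemma P3:
  fixes \<tau> u \<epsilon> :: real
  assumes e: "0 < \<epsilon>" and ut: "\<bar>u - \<tau>\<bar> < min 1 (\<epsilon>/2)" and t: "\<bar>\<tau>\<bar> > 2/\<epsilon> + 2"
  shows "\<bar>TT u \<tau>\<bar> < \<epsilon>"
proof -
  have ut1: "\<bar>u - \<tau>\<bar> < 1" and ut2: "\<bar>u - \<tau>\<bar> < \<epsilon>/2" using ut by auto
  have tri: "\<bar>\<tau>\<bar> \<le> \<bar>\<tau> - u\<bar> + \<bar>u\<bar>" by linarith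
  have uK: "\<bar>u\<bar> > 2/\<epsilon> + 1" using ut1 t tri by (simp add: abs_minus_commute)
  have pe: "2/\<epsilon> > 0" using e by simp
  have u1: "\<not> \<bar>u\<bar> \<le> 1" using uK pe by linarith
  have pp: "0 < \<bar>u\<bar> * (2/\<epsilon> + 1)" proof (rule mult_pos_pos)
    show "0 < 2/\<epsilon> + 1" using pe by linarith
    then show "0 < \<bar>u\<bar>" using uK by linarith
  qed
  have "1/\<bar>u\<bar> < 1/(2/\<epsilon> + 1)" using uK pe pp by (intro divide_strict_left_mono) auto
  also have "1/(2/\<epsilon> + 1) = \<epsilon> / (2 + \<epsilon>)" using e by (simp add: field_simps)
  also have "\<epsilon> / (2 + \<epsilon>) < \<epsilon>/2" using e by (intro divide_strict_left_mono) auto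
  finally have iu: "\<bar>1/u\<bar> < \<epsilon>/2" by simp
  have tri2: "\<bar>u - 1/u - \<tau>\<bar> \<le> \<bar>u - \<tau>\<bar> + \<bar>1/u\<bar>" by linarith
  have TTe: "TT u \<tau> = u - 1/u - \<tau>" using u1 by (simp add: TT_def)
  show ?thesis unfolding TTe using iu ut2 tri2 by linarith
qed


lemma prob_space_sample_law: "prob_space (sample_law n t)"
  unfolding sample_law_def
  by (rule prob_space_PiM) (rule prob_space_normal_density, simp)

lemma meas_mean: "sample_mean n \<in> borel_measurable (sample_law n t)"
  unfolding sample_mean_def sample_law_def by measurable

lemma meas_T: "(\<lambda>y. (alasso m (sample_mean n y) - t)/m) \<in> borel_measurable (sample_law n \<theta>)"
  unfolding alasso_def using meas_mean by measurable

lemma conv_generic: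
  fixes \<mu> \<theta> :: "nat \<Rightarrow> real" and c :: real
  assumes pos: "\<And>n. \<mu> n > 0" and rate: "filterlim (\<lambda>n. sqrt (real n) * \<mu> n) at_top sequentially"
    and det: "\<And>\<epsilon>. \<epsilon> > 0 \<Longrightarrow> \<exists>\<delta>>0. eventually (\<lambda>n. \<forall>v. \<bar>v - \<theta> n\<bar> < \<delta> * \<mu> n \<longrightarrow>
                 \<bar>(alasso (\<mu> n) v - \<theta> n)/\<mu> n - c\<bar> < \<epsilon>) sequentially"
  shows "cdf_weak_conv (\<lambda>n. G_A \<mu> n (\<theta> n)) (step_cdf c)"
  unfolding cdf_weak_conv_def
proof (intro allI impI)
  fix x assume cont: "isCont (step_cdf c) x"
  have xc: "x \<noteq> c"
  proof
    assume xc: "x = c"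
    have l0: "(\<lambda>k. c - inverse (real (Suc k))) \<longlonglongrightarrow> c - 0"
      by (rule tendsto_diff[OF tendsto_const LIMSEQ_inverse_real_of_nat])
    then have l: "(\<lambda>k. c - inverse (real (Suc k))) \<longlonglongrightarrow> c" by (simp only: diff_zero)
    have "(\<lambda>k. step_cdf c (c - inverse (real (Suc k)))) \<longlonglongrightarrow> step_cdf c c"
      using isCont_tendsto_compose[OF cont[unfolded xc] l] .
    moreover have "(\<lambda>k. step_cdf c (c - inverse (real (Suc k)))) = (\<lambda>k. 0)"
      by (rule ext) (simp add: step_cdf_def)
    moreover have "step_cdf c c = 1" by (simp add: step_cdf_def)
    ultimately have "(\<lambda>k. 0::real) \<longlonglongrightarrow> 1" by (simp only:)
    then have "(0::real) = 1" by (rule LIMSEQ_const_iff[THEN iffD1])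
    then show False by simp
  qed
  define \<epsilon> where "\<epsilon> = \<bar>x - c\<bar>"
  have \<epsilon>: "\<epsilon> > 0" using xc by (simp add: \<epsilon>_def)
  obtain \<delta> where \<delta>: "\<delta> > 0" and ev: "eventually (\<lambda>n. \<forall>v. \<bar>v - \<theta> n\<bar> < \<delta> * \<mu> n \<longrightarrow>
                 \<bar>(alasso (\<mu> n) v - \<theta> n)/\<mu> n - c\<bar> < \<epsilon>) sequentially"
    using det[OF \<epsilon>] by blast
  define r where "r n = 1 / (real n * (\<delta> * \<mu> n)^2)" for n
  have r0: "r \<longlonglongrightarrow> 0"
  proof -
    have f: "filterlim (\<lambda>n. \<delta> * (sqrt (real n) * \<mu> n)) at_top sequentially"
      by (rule filterlim_tendsto_pos_mult_at_top[OF tendsto_const \<delta> rate])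
    have "filterlim (\<lambda>n. (\<delta> * (sqrt (real n) * \<mu> n)) * (\<delta> * (sqrt (real n) * \<mu> n))) at_top sequentially"
      by (rule filterlim_at_top_mult_at_top[OF f f])
    then have "(\<lambda>n. inverse ((\<delta> * (sqrt (real n) * \<mu> n)) * (\<delta> * (sqrt (real n) * \<mu> n)))) \<longlonglongrightarrow> 0"
      by (rule tendsto_inverse_0_at_top)
    moreover have "inverse ((\<delta> * (sqrt (real n) * \<mu> n)) * (\<delta> * (sqrt (real n) * \<mu> n))) = r n" for n
    proof -
      have "(\<delta> * (sqrt (real n) * \<mu> n)) * (\<delta> * (sqrt (real n) * \<mu> n))
            = (sqrt (real n) * sqrt (real n)) * (\<delta> * \<mu> n)^2" by (simp add: power2_eq_square algebra_simps)
      also have "sqrt (real n) * sqrt (real n) = real n" by simp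
      finally show ?thesis by (simp add: r_def divide_inverse)
    qed
    ultimately show ?thesis by simp
  qed
  have key: "eventually (\<lambda>n. (c < x \<longrightarrow> 1 - r n \<le> G_A \<mu> n (\<theta> n) x \<and> G_A \<mu> n (\<theta> n) x \<le> 1)
       \<and> (x < c \<longrightarrow> 0 \<le> G_A \<mu> n (\<theta> n) x \<and> G_A \<mu> n (\<theta> n) x \<le> r n)) sequentially"
    using ev eventually_ge_at_top[of 1]
  proof eventually_elim
    case (elim n)
    define P where "P = sample_law n (\<theta> n)"
    interpret prob_space P unfolding P_def by (rule prob_space_sample_law)
    define T where "T y = (alasso (\<mu> n) (sample_mean n y) - \<theta> n)/\<mu> n" for y
    define S where "S = {y \<in> space P. T y \<le> x}"
    define B where "B = {y \<in> space P. \<delta> * \<mu> n \<le> \<bar>sample_mean n y - \<theta> n\<bar>}"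
    have G: "G_A \<mu> n (\<theta> n) x = prob S" by (simp add: G_A_def S_def P_def T_def)
    have Sm: "S \<in> events" unfolding S_def T_def P_def using meas_T by measurable
    have Bm: "B \<in> events" unfolding B_def P_def using meas_mean by measurable
    have dm: "\<delta> * \<mu> n > 0" using \<delta> pos by simp
    have PB: "prob B \<le> r n"
      using sample_mean_tail[OF elim(2) dm, of "\<theta> n"] by (simp add: B_def P_def r_def)
    have good: "\<bar>T y - c\<bar> < \<epsilon>" if "y \<in> space P - B" for y
      using elim(1) that by (auto simp: B_def T_def not_le)
    show ?case
    proof (intro conjI impI)
      assume cx: "c < x"
      have "space P - B \<subseteq> S" using good cx by (fastforce simp: S_def \<epsilon>_def)
      then have "prob (space P - B) \<le> prob S" by (rule finite_measure_mono) (rule Sm)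
      moreover have "prob (space P - B) = 1 - prob B" by (rule prob_compl[OF Bm])
      ultimately show "1 - r n \<le> G_A \<mu> n (\<theta> n) x" using PB G by linarith
      show "G_A \<mu> n (\<theta> n) x \<le> 1" unfolding G by (rule prob_le_1)
    next
      assume cx: "x < c"
      have "S \<subseteq> B"
      proof
        fix y assume y: "y \<in> S"
        show "y \<in> B"
        proof (rule ccontr)
          assume "y \<notin> B"
          then have "\<bar>T y - c\<bar> < \<epsilon>" using y good by (auto simp: S_def)
          then show False using y cx by (auto simp: S_def \<epsilon>_def)
        qed
      qed
      then have "prob S \<le> prob B" by (rule finite_measure_mono) (rule Bm)
      then show "G_A \<mu> n (\<theta> n) x \<le> r n" using PB G by linarith
      show "0 \<le> G_A \<mu> n (\<theta> n) x" unfolding G by (rule measure_nonneg)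
    qed
  qed
  show "(\<lambda>n. G_A \<mu> n (\<theta> n) x) \<longlonglongrightarrow> step_cdf c x"
  proof (cases "c < x")
    case True
    have s: "step_cdf c x = 1" using True by (simp add: step_cdf_def)
    have l1: "(\<lambda>n. 1 - r n) \<longlonglongrightarrow> 1" using tendsto_diff[OF tendsto_const r0, of 1] by simp
    have e1: "eventually (\<lambda>n. 1 - r n \<le> G_A \<mu> n (\<theta> n) x) sequentially"
      using key by eventually_elim (use True in auto)
    have e2: "eventually (\<lambda>n. G_A \<mu> n (\<theta> n) x \<le> 1) sequentially"
      using key by eventually_elim (use True in auto)
    show ?thesis unfolding s
      by (rule tendsto_sandwich[OF e1 e2 l1 tendsto_const])
  next
    case False
    then have cx: "x < c" using xc by simp
    have s: "step_cdf c x = 0" using cx by (simp add: step_cdf_def)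
    have e1: "eventually (\<lambda>n. 0 \<le> G_A \<mu> n (\<theta> n) x) sequentially"
      using key by eventually_elim (use cx in auto)
    have e2: "eventually (\<lambda>n. G_A \<mu> n (\<theta> n) x \<le> r n) sequentially"
      using key by eventually_elim (use cx in auto)
    show ?thesis unfolding s
      by (rule tendsto_sandwich[OF e1 e2 tendsto_const r0])
  qed
qed


lemma det_real1:
  fixes \<mu> \<theta> :: "nat \<Rightarrow> real"
  assumes pos: "\<And>n. \<mu> n > 0" and tz: "(\<lambda>n. \<theta> n / \<mu> n) \<longlonglongrightarrow> z" and z: "\<bar>z\<bar> < 1" and e: "\<epsilon> > 0"
  shows "\<exists>\<delta>>0. eventually (\<lambda>n. \<forall>v. \<bar>v - \<theta> n\<bar> < \<delta> * \<mu> n \<longrightarrow>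
                 \<bar>(alasso (\<mu> n) v - \<theta> n)/\<mu> n - (- z)\<bar> < \<epsilon>) sequentially"
proof -
  define \<eta> where "\<eta> = min \<epsilon> ((1 - \<bar>z\<bar>)/3)"
  have \<eta>3: "\<eta> \<le> (1 - \<bar>z\<bar>)/3" unfolding \<eta>_def by (rule min.cobounded2)
  have \<eta>4: "\<eta> * 3 \<le> 1 - \<bar>z\<bar>" using \<eta>3 by (subst (asm) pos_le_divide_eq) auto
  have \<eta>: "\<eta> > 0" "\<eta> \<le> \<epsilon>" "3 * \<eta> \<le> 1 - \<bar>z\<bar>"
    using e z \<eta>4 by (auto simp: \<eta>_def mult.commute)
  have ev: "eventually (\<lambda>n. dist (\<theta> n / \<mu> n) z < \<eta>) sequentially"
    using tz \<eta>(1) by (rule tendstoD)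
  show ?thesis
  proof (intro exI conjI)
    show "\<eta> > 0" by fact
    show "eventually (\<lambda>n. \<forall>v. \<bar>v - \<theta> n\<bar> < \<eta> * \<mu> n \<longrightarrow>
                 \<bar>(alasso (\<mu> n) v - \<theta> n)/\<mu> n - (- z)\<bar> < \<epsilon>) sequentially"
      using ev
    proof eventually_elim
      case (elim n)
      show ?case
      proof (intro allI impI)
        fix v assume "\<bar>v - \<theta> n\<bar> < \<eta> * \<mu> n"
        then have uv: "\<bar>v/\<mu> n - \<theta> n/\<mu> n\<bar> < \<eta>" using pos by (intro scaled_close) auto
        have tz': "\<bar>\<theta> n/\<mu> n - z\<bar> < \<eta>" using elim by (simp add: dist_real_def)
        show "\<bar>(alasso (\<mu> n) v - \<theta> n)/\<mu> n - (- z)\<bar> < \<epsilon>"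
          unfolding alasso_scaled[OF pos] by (rule P1[OF z tz' uv \<eta>(3) \<eta>(2)])
      qed
    qed
  qed
qed

lemma det_real2:
  fixes \<mu> \<theta> :: "nat \<Rightarrow> real"
  assumes pos: "\<And>n. \<mu> n > 0" and tz: "(\<lambda>n. \<theta> n / \<mu> n) \<longlonglongrightarrow> z" and z: "1 \<le> \<bar>z\<bar>" and e: "\<epsilon> > 0"
  shows "\<exists>\<delta>>0. eventually (\<lambda>n. \<forall>v. \<bar>v - \<theta> n\<bar> < \<delta> * \<mu> n \<longrightarrow>
                 \<bar>(alasso (\<mu> n) v - \<theta> n)/\<mu> n - (- 1 / z)\<bar> < \<epsilon>) sequentially"
proof -
  define \<eta> where "\<eta> = min 1 (\<epsilon>/9)"
  have \<eta>: "\<eta> > 0" "\<eta> \<le> 1" "9 * \<eta> \<le> \<epsilon>" using e by (auto simp: \<eta>_def)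
  have ev: "eventually (\<lambda>n. dist (\<theta> n / \<mu> n) z < \<eta>) sequentially"
    using tz \<eta>(1) by (rule tendstoD)
  show ?thesis
  proof (intro exI conjI)
    show "\<eta> > 0" by fact
    show "eventually (\<lambda>n. \<forall>v. \<bar>v - \<theta> n\<bar> < \<eta> * \<mu> n \<longrightarrow>
                 \<bar>(alasso (\<mu> n) v - \<theta> n)/\<mu> n - (- 1 / z)\<bar> < \<epsilon>) sequentially"
      using ev
    proof eventually_elim
      case (elim n)
      show ?case
      proof (intro allI impI)
        fix v assume "\<bar>v - \<theta> n\<bar> < \<eta> * \<mu> n"
        then have uv: "\<bar>v/\<mu> n - \<theta> n/\<mu> n\<bar> < \<eta>" using pos by (intro scaled_close) auto
        have tz': "\<bar>\<theta> n/\<mu> n - z\<bar> < \<eta>" using elim by (simp add: dist_real_def)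
        show "\<bar>(alasso (\<mu> n) v - \<theta> n)/\<mu> n - (- 1 / z)\<bar> < \<epsilon>"
          unfolding alasso_scaled[OF pos] by (rule P2[OF z tz' uv \<eta>])
      qed
    qed
  qed
qed

lemma det_inf:
  fixes \<mu> \<theta> :: "nat \<Rightarrow> real"
  assumes pos: "\<And>n. \<mu> n > 0" and big: "\<And>K. eventually (\<lambda>n. \<bar>\<theta> n / \<mu> n\<bar> > K) sequentially"
    and e: "\<epsilon> > 0"
  shows "\<exists>\<delta>>0. eventually (\<lambda>n. \<forall>v. \<bar>v - \<theta> n\<bar> < \<delta> * \<mu> n \<longrightarrow>
                 \<bar>(alasso (\<mu> n) v - \<theta> n)/\<mu> n - 0\<bar> < \<epsilon>) sequentially"
proof -
  define \<eta> where "\<eta> = min 1 (\<epsilon>/2)"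
  have \<eta>: "\<eta> > 0" using e by (auto simp: \<eta>_def)
  show ?thesis
  proof (intro exI conjI)
    show "\<eta> > 0" by fact
    show "eventually (\<lambda>n. \<forall>v. \<bar>v - \<theta> n\<bar> < \<eta> * \<mu> n \<longrightarrow>
                 \<bar>(alasso (\<mu> n) v - \<theta> n)/\<mu> n - 0\<bar> < \<epsilon>) sequentially"
      using big[of "2/\<epsilon> + 2"]
    proof eventually_elim
      case (elim n)
      show ?case
      proof (intro allI impI)
        fix v assume "\<bar>v - \<theta> n\<bar> < \<eta> * \<mu> n"
        then have uv: "\<bar>v/\<mu> n - \<theta> n/\<mu> n\<bar> < min 1 (\<epsilon>/2)" using pos unfolding \<eta>_def by (intro scaled_close) auto
        show "\<bar>(alasso (\<mu> n) v - \<theta> n)/\<mu> n - 0\<bar> < \<epsilon>"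
          unfolding alasso_scaled[OF pos] diff_zero by (rule P3[OF e uv elim])
      qed
    qed
  qed
qed

theorem theorem4:
  fixes \<mu> \<theta> :: "nat \<Rightarrow> real" and \<zeta> :: ereal
  assumes pos: "\<And>n. \<mu> n > 0"
    and mu0: "\<mu> \<longlonglongrightarrow> 0"
    and rate: "filterlim (\<lambda>n. sqrt (real n) * \<mu> n) at_top sequentially"
    and zeta: "(\<lambda>n. ereal (\<theta> n / \<mu> n)) \<longlonglongrightarrow> \<zeta>"
  shows "(\<bar>\<zeta>\<bar> < 1 \<longrightarrow>
            cdf_weak_conv (\<lambda>n. G_A \<mu> n (\<theta> n)) (step_cdf (- real_of_ereal \<zeta>)))
       \<and> (1 \<le> \<bar>\<zeta>\<bar> \<and> \<bar>\<zeta>\<bar> < \<infinity> \<longrightarrow>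
            cdf_weak_conv (\<lambda>n. G_A \<mu> n (\<theta> n)) (step_cdf (- 1 / real_of_ereal \<zeta>)))
       \<and> (\<bar>\<zeta>\<bar> = \<infinity> \<longrightarrow>
            cdf_weak_conv (\<lambda>n. G_A \<mu> n (\<theta> n)) (step_cdf 0))"
proof (cases \<zeta>)
  case (real z)
  have tz: "(\<lambda>n. \<theta> n / \<mu> n) \<longlonglongrightarrow> z" using zeta unfolding real by (simp add: lim_ereal)
  have A: "cdf_weak_conv (\<lambda>n. G_A \<mu> n (\<theta> n)) (step_cdf (- z))" if z: "\<bar>z\<bar> < 1"
    by (rule conv_generic[OF pos rate det_real1[OF pos tz z]])
  have B: "cdf_weak_conv (\<lambda>n. G_A \<mu> n (\<theta> n)) (step_cdf (- 1 / z))" if z: "1 \<le> \<bar>z\<bar>"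
    by (rule conv_generic[OF pos rate det_real2[OF pos tz z]])
  show ?thesis using A B unfolding real by auto
next
  case PInf
  have big: "eventually (\<lambda>n. \<bar>\<theta> n / \<mu> n\<bar> > K) sequentially" for K
  proof -
    have "eventually (\<lambda>n. ereal (\<theta> n / \<mu> n) > ereal K) sequentially"
      using zeta unfolding PInf tendsto_PInfty by blast
    then show ?thesis
    proof eventually_elim
      case (elim n)
      then have "K < \<theta> n / \<mu> n" by simp
      then show ?case using abs_ge_self[of "\<theta> n / \<mu> n"] by linarith
    qed
  qed
  have C: "cdf_weak_conv (\<lambda>n. G_A \<mu> n (\<theta> n)) (step_cdf 0)"
    by (rule conv_generic[OF pos rate det_inf[OF pos big]])
  show ?thesis using C unfolding PInf by auto
next
  case MInf
  have big: "eventually (\<lambda>n. \<bar>\<theta> n / \<mu> n\<bar> > K) sequentially" for K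
  proof -
    have "eventually (\<lambda>n. ereal (\<theta> n / \<mu> n) < ereal (- K)) sequentially"
      using zeta unfolding MInf tendsto_MInfty by blast
    then show ?thesis
    proof eventually_elim
      case (elim n)
      then have "\<theta> n / \<mu> n < - K" by simp
      then show ?case using abs_ge_minus_self[of "\<theta> n / \<mu> n"] by linarith
    qed
  qed
  have C: "cdf_weak_conv (\<lambda>n. G_A \<mu> n (\<theta> n)) (step_cdf 0)"
    by (rule conv_generic[OF pos rate det_inf[OF pos big]])
  show ?thesis using C unfolding MInf by auto
qed

end
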